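(* Let $\mathscr G=(\mathscr V,\mathscr E)$ be a finite connected graph with $N$ vertices and $M\ge0$ an integer. The unique stationary distribution $\pi_Y$ of the immediate exchange model on $\mathscr C_{N,M}$ is reversible and $$\pi_Y(\xi)=\frac{\mu(\xi)}{\sum_{\eta\in\mathscr C_{N,M}}\mu(\eta)}\quad\text{where}\quad \mu(\xi)=\prod_{z\in\mathscr V}(\xi(z)+1).$$
   Context: $\mathscr C_{N,M}$ is the set of maps $\xi:\mathscr V\to\mathbb N$ with $\sum_x\xi(x)=M$. The immediate exchange model is the discrete-time Markov chain on $\mathscr C_{N,M}$: at each step an edge $(x,y)\in\mathscr E$ is chosen uniformly at random, independent $U_1$ uniform on $\{0,\dots,Y_t(x)\}$ and $U_2$ uniform on $\{0,\dots,Y_t(y)\}$ are drawn, and $Y_{t+1}(x)=Y_t(x)-U_1+U_2$, $Y_{t+1}(y)=Y_t(y)-U_2+U_1$, $Y_{t+1}(z)=Y_t(z)$ for $z\notin\{x,y\}$. This chain has a unique stationary distribution, denoted $\pi_Y$. *)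

theory Defs
  imports Complex_Main
begin

definition finite_connected_graph :: "'a set \<Rightarrow> ('a \<times> 'a) set \<Rightarrow> bool" where
  "finite_connected_graph V E \<longleftrightarrow>
     finite V \<and> V \<noteq> {} \<and> E \<subseteq> V \<times> V \<and> sym E \<and> irrefl E \<and>
     (\<forall>x\<in>V. \<forall>y\<in>V. (x, y) \<in> E\<^sup>*)"

definition configs :: "'a set \<Rightarrow> nat \<Rightarrow> ('a \<Rightarrow> nat) set" where
  "configs V M = {\<xi>. (\<forall>x. x \<notin> V \<longrightarrow> \<xi> x = 0) \<and> (\<Sum>x\<in>V. \<xi> x) = M}"

text \<open>An (ordered) edge
(x,y) in E is chosen uniformly; since E is symmetric and the update is symmetric in (x,y)
this is the same as choosing an undirected edge uniformly.  (If E is empty the chain stays put.)\<close>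
definition ie_step :: "('a \<times> 'a) set \<Rightarrow> ('a \<Rightarrow> nat) \<Rightarrow> ('a \<Rightarrow> nat) \<Rightarrow> real" where
  "ie_step E \<xi> \<eta> =
     (if E = {} then (if \<eta> = \<xi> then 1 else 0) else
      (1 / real (card E)) *
      (\<Sum>(x, y)\<in>E. \<Sum>u1\<in>{0..\<xi> x}. \<Sum>u2\<in>{0..\<xi> y}.
          (if \<eta> = \<xi>(x := \<xi> x - u1 + u2, y := \<xi> y - u2 + u1)
           then 1 / (real (\<xi> x + 1) * real (\<xi> y + 1)) else 0)))"

definition stationary ::
  "'a set \<Rightarrow> ('a \<times> 'a) set \<Rightarrow> nat \<Rightarrow> (('a \<Rightarrow> nat) \<Rightarrow> real) \<Rightarrow> bool" where
  "stationary V E M \<pi> \<longleftrightarrow>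
     (\<forall>\<xi>\<in>configs V M. \<pi> \<xi> \<ge> 0) \<and> (\<Sum>\<xi>\<in>configs V M. \<pi> \<xi>) = 1 \<and>
     (\<forall>\<eta>\<in>configs V M. (\<Sum>\<xi>\<in>configs V M. \<pi> \<xi> * ie_step E \<xi> \<eta>) = \<pi> \<eta>)"

definition reversible ::
  "'a set \<Rightarrow> ('a \<times> 'a) set \<Rightarrow> nat \<Rightarrow> (('a \<Rightarrow> nat) \<Rightarrow> real) \<Rightarrow> bool" where
  "reversible V E M \<pi> \<longleftrightarrow>
     (\<forall>\<xi>\<in>configs V M. \<forall>\<eta>\<in>configs V M. \<pi> \<xi> * ie_step E \<xi> \<eta> = \<pi> \<eta> * ie_step E \<eta> \<xi>)"

definition mu :: "'a set \<Rightarrow> ('a \<Rightarrow> nat) \<Rightarrow> real" where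
  "mu V \<xi> = (\<Prod>z\<in>V. real (\<xi> z + 1))"

end

theory Submission
  imports Defs "HOL-Library.FuncSet"
begin

abbreviation upd :: "('a \<Rightarrow> nat) \<Rightarrow> 'a \<Rightarrow> 'a \<Rightarrow> nat \<Rightarrow> nat \<Rightarrow> ('a \<Rightarrow> nat)" where
  "upd \<xi> x y u1 u2 \<equiv> \<xi>(x := \<xi> x - u1 + u2, y := \<xi> y - u2 + u1)"

lemma fcg_props:
  assumes "finite_connected_graph V E"
  shows "finite V" "V \<noteq> {}" "E \<subseteq> V \<times> V" "sym E" "irrefl E"
        "\<And>x y. x\<in>V \<Longrightarrow> y\<in>V \<Longrightarrow> (x,y)\<in>E\<^sup>*" "finite E"
  using assms unfolding finite_connected_graph_def
  by (auto intro: finite_subset[of E "V\<times>V"])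

lemma configs_finite:
  assumes "finite V" shows "finite (configs V M)"
proof -
  have "configs V M \<subseteq> (\<lambda>f x. if x \<in> V then f x else 0) ` (V \<rightarrow>\<^sub>E {0..M})"
  proof
    fix \<xi> assume h: "\<xi> \<in> configs V M"
    hence z: "\<forall>x. x\<notin>V \<longrightarrow> \<xi> x = 0" and s: "(\<Sum>x\<in>V. \<xi> x) = M" by (auto simp: configs_def)
    have le: "\<xi> x \<le> M" if "x\<in>V" for x
      using member_le_sum[of x V \<xi>] that assms s by auto
    have "\<xi> = (\<lambda>x. if x \<in> V then restrict \<xi> V x else 0)" using z by auto
    moreover have "restrict \<xi> V \<in> V \<rightarrow>\<^sub>E {0..M}" using le by auto
    ultimately show "\<xi> \<in> (\<lambda>f x. if x \<in> V then f x else 0) ` (V \<rightarrow>\<^sub>E {0..M})" by blast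
  qed
  moreover have "finite (V \<rightarrow>\<^sub>E {0..M})" using assms by (intro finite_PiE) auto
  ultimately show ?thesis by (meson finite_imageI finite_subset)
qed

lemma configs_nonempty:
  assumes "finite V" "v \<in> V" shows "(\<lambda>z. if z = v then M else 0) \<in> configs V M"
  using assms by (auto simp: configs_def)

lemma sum_two:
  fixes f :: "'a \<Rightarrow> 'b::comm_monoid_add"
  assumes "finite V" "x\<in>V" "y\<in>V" "x\<noteq>y"
  shows "sum f V = f x + f y + sum f (V - {x,y})"
proof -
  have "sum f V = f x + sum f (V - {x})" using assms by (simp add: sum.remove)
  also have "sum f (V - {x}) = f y + sum f (V - {x} - {y})" using assms by (intro sum.remove) auto
  also have "V - {x} - {y} = V - {x,y}" by auto
  finally show ?thesis by (simp add: add.assoc)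
qed

lemma prod_two:
  fixes f :: "'a \<Rightarrow> 'b::comm_monoid_mult"
  assumes "finite V" "x\<in>V" "y\<in>V" "x\<noteq>y"
  shows "prod f V = f x * f y * prod f (V - {x,y})"
proof -
  have "prod f V = f x * prod f (V - {x})" using assms by (simp add: prod.remove)
  also have "prod f (V - {x}) = f y * prod f (V - {x} - {y})" using assms by (intro prod.remove) auto
  also have "V - {x} - {y} = V - {x,y}" by auto
  finally show ?thesis by (simp add: mult.assoc)
qed

lemma upd_configs:
  assumes "finite V" "x\<in>V" "y\<in>V" "x\<noteq>y" "u1 \<le> \<xi> x" "u2 \<le> \<xi> y" "\<xi> \<in> configs V M"
  shows "upd \<xi> x y u1 u2 \<in> configs V M"
proof -
  let ?f = "upd \<xi> x y u1 u2"
  have "(\<Sum>z\<in>V. ?f z) = ?f x + ?f y + (\<Sum>z\<in>V-{x,y}. ?f z)" by (rule sum_two) (use assms in auto)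
  also have "(\<Sum>z\<in>V-{x,y}. ?f z) = (\<Sum>z\<in>V-{x,y}. \<xi> z)" by (rule sum.cong) auto
  also have "?f x + ?f y = \<xi> x + \<xi> y" using assms by auto
  also have "\<xi> x + \<xi> y + (\<Sum>z\<in>V-{x,y}. \<xi> z) = (\<Sum>z\<in>V. \<xi> z)" by (rule sum_two[symmetric]) (use assms in auto)
  finally have eq: "sum ?f V = sum \<xi> V" .
  have z: "\<forall>z. z\<notin>V \<longrightarrow> ?f z = 0" using assms by (auto simp: configs_def)
  have s: "sum \<xi> V = M" using assms(7) by (simp add: configs_def)
  show ?thesis unfolding configs_def by (rule CollectI, rule conjI, fact z, simp only: eq s)
qed

lemma ite_nonneg: "0 \<le> (if P then 1 / (real a * real b) else (0::real))" by simp

lemma step_nonneg: "ie_step E \<xi> \<eta> \<ge> 0"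
  unfolding ie_step_def split_def by (auto intro!: sum_nonneg divide_nonneg_nonneg ite_nonneg)

lemma edge_row:
  assumes "finite V" "x\<in>V" "y\<in>V" "x\<noteq>y" "\<xi> \<in> configs V M"
  shows "(\<Sum>\<eta>\<in>configs V M. \<Sum>u1\<in>{0..\<xi> x}. \<Sum>u2\<in>{0..\<xi> y}.
     (if \<eta> = upd \<xi> x y u1 u2 then 1 / (real (\<xi> x + 1) * real (\<xi> y + 1)) else 0)) = 1"
proof -
  let ?c = "1 / (real (\<xi> x + 1) * real (\<xi> y + 1))"
  have "(\<Sum>\<eta>\<in>configs V M. \<Sum>u1\<in>{0..\<xi> x}. \<Sum>u2\<in>{0..\<xi> y}.
     (if \<eta> = upd \<xi> x y u1 u2 then ?c else 0)) =
     (\<Sum>u1\<in>{0..\<xi> x}. \<Sum>u2\<in>{0..\<xi> y}. \<Sum>\<eta>\<in>configs V M.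
     (if \<eta> = upd \<xi> x y u1 u2 then ?c else 0))"
    by (subst sum.swap, rule sum.cong, simp, rule sum.swap)
  also have "\<dots> = (\<Sum>u1\<in>{0..\<xi> x}. \<Sum>u2\<in>{0..\<xi> y}. ?c)"
  proof (intro sum.cong refl)
    fix u1 u2 assume "u1 \<in> {0..\<xi> x}" "u2 \<in> {0..\<xi> y}"
    hence m: "upd \<xi> x y u1 u2 \<in> configs V M" using upd_configs[OF assms(1-4) _ _ assms(5)] by auto
    show "(\<Sum>\<eta>\<in>configs V M. (if \<eta> = upd \<xi> x y u1 u2 then ?c else 0)) = ?c"
      by (simp only: sum.delta[OF configs_finite[OF assms(1)]] m if_True)
  qed
  also have "\<dots> = 1"
  proof -
    have "real (\<xi> x + 1) * real (\<xi> y + 1) > 0" by simp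
    thus ?thesis by (simp only: sum_constant card_atLeastAtMost) (simp add: field_simps)
  qed
  finally show ?thesis .
qed

lemma row_sum:
  assumes "finite_connected_graph V E" "\<xi> \<in> configs V M"
  shows "(\<Sum>\<eta>\<in>configs V M. ie_step E \<xi> \<eta>) = 1"
proof (cases "E = {}")
  case True thus ?thesis using assms configs_finite[OF fcg_props(1)[OF assms(1)]] by (simp add: ie_step_def)
next
  case False
  note P = fcg_props[OF assms(1)]
  let ?G = "\<lambda>\<eta> (x, y). \<Sum>u1\<in>{0..\<xi> x}. \<Sum>u2\<in>{0..\<xi> y}.
          (if \<eta> = upd \<xi> x y u1 u2 then 1 / (real (\<xi> x + 1) * real (\<xi> y + 1)) else (0::real))"
  have "(\<Sum>\<eta>\<in>configs V M. ie_step E \<xi> \<eta>) = (\<Sum>\<eta>\<in>configs V M. (1 / real (card E)) * sum (?G \<eta>) E)"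
    using False by (simp add: ie_step_def)
  also have "\<dots> = (1 / real (card E)) * (\<Sum>e\<in>E. \<Sum>\<eta>\<in>configs V M. ?G \<eta> e)"
    by (simp only: sum_distrib_left[symmetric] sum.swap[of _ _ E])
  also have "(\<Sum>e\<in>E. \<Sum>\<eta>\<in>configs V M. ?G \<eta> e) = (\<Sum>e\<in>E. 1)"
  proof (rule sum.cong, simp)
    fix e assume "e \<in> E"
    then obtain x y where e: "e = (x,y)" "(x,y) \<in> E" by (cases e) auto
    hence "x \<in> V" "y \<in> V" "x \<noteq> y" using P(3,5) by (auto simp: irrefl_def)
    thus "(\<Sum>\<eta>\<in>configs V M. ?G \<eta> e) = 1" using edge_row[OF P(1) _ _ _ assms(2)] e by simp
  qed
  finally show ?thesis using False P(7) by simp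
qed


lemma cnt:
  fixes k :: real
  assumes "finite I" "finite J"
  shows "(\<Sum>u1\<in>I. \<Sum>u2\<in>J. if P u1 u2 then k else 0) = k * card {p \<in> I\<times>J. P (fst p) (snd p)}"
proof -
  have "(\<Sum>u1\<in>I. \<Sum>u2\<in>J. if P u1 u2 then k else 0) = (\<Sum>p\<in>I\<times>J. if P (fst p) (snd p) then k else 0)"
    by (simp add: sum.cartesian_product split_def)
  also have "\<dots> = (\<Sum>p\<in>{p \<in> I\<times>J. P (fst p) (snd p)}. k)"
    using assms by (simp add: sum.inter_filter[symmetric])
  finally show ?thesis by simp
qed

lemma swap_mem:
  assumes "x \<noteq> y" "u1 \<le> \<xi> x" "u2 \<le> \<xi> y" "\<eta> = upd \<xi> x y u1 u2"
  shows "u2 \<le> \<eta> x" "u1 \<le> \<eta> y" "\<xi> = upd \<eta> x y u2 u1"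
  using assms by auto

lemma edge_rev:
  assumes "finite V" "x\<in>V" "y\<in>V" "x\<noteq>y"
  shows "mu V \<xi> * (\<Sum>u1\<in>{0..\<xi> x}. \<Sum>u2\<in>{0..\<xi> y}. if \<eta> = upd \<xi> x y u1 u2 then 1/(real(\<xi> x+1)*real(\<xi> y+1)) else 0)
       = mu V \<eta> * (\<Sum>u1\<in>{0..\<eta> x}. \<Sum>u2\<in>{0..\<eta> y}. if \<xi> = upd \<eta> x y u1 u2 then 1/(real(\<eta> x+1)*real(\<eta> y+1)) else 0)"
proof -
  define A where "A = {p\<in>{0..\<xi> x}\<times>{0..\<xi> y}. \<eta> = upd \<xi> x y (fst p) (snd p)}"
  define B where "B = {p\<in>{0..\<eta> x}\<times>{0..\<eta> y}. \<xi> = upd \<eta> x y (fst p) (snd p)}"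
  define cx where "cx = (\<Prod>z\<in>V-{x,y}. real (\<xi> z + 1))"
  define cy where "cy = (\<Prod>z\<in>V-{x,y}. real (\<eta> z + 1))"
  have mx: "mu V \<xi> = real(\<xi> x+1)*real(\<xi> y+1)*cx" unfolding mu_def cx_def
    by (rule prod_two) (use assms in auto)
  have my: "mu V \<eta> = real(\<eta> x+1)*real(\<eta> y+1)*cy" unfolding mu_def cy_def
    by (rule prod_two) (use assms in auto)
  have L: "mu V \<xi> * (\<Sum>u1\<in>{0..\<xi> x}. \<Sum>u2\<in>{0..\<xi> y}. if \<eta> = upd \<xi> x y u1 u2 then 1/(real(\<xi> x+1)*real(\<xi> y+1)) else 0)
     = cx * card A"
  proof -
    have p: "real(\<xi> x+1)*real(\<xi> y+1) > 0" by simp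
    show ?thesis unfolding cnt[OF finite_atLeastAtMost finite_atLeastAtMost] A_def mx
      using p by (simp add: field_simps)
  qed
  have R: "mu V \<eta> * (\<Sum>u1\<in>{0..\<eta> x}. \<Sum>u2\<in>{0..\<eta> y}. if \<xi> = upd \<eta> x y u1 u2 then 1/(real(\<eta> x+1)*real(\<eta> y+1)) else 0)
     = cy * card B"
  proof -
    have p: "real(\<eta> x+1)*real(\<eta> y+1) > 0" by simp
    show ?thesis unfolding cnt[OF finite_atLeastAtMost finite_atLeastAtMost] B_def my
      using p by (simp add: field_simps)
  qed
  have AB: "prod.swap ` A \<subseteq> B"
  proof
    fix q assume "q \<in> prod.swap ` A"
    then obtain u1 u2 where q: "q = (u2, u1)" "u1 \<le> \<xi> x" "u2 \<le> \<xi> y" "\<eta> = upd \<xi> x y u1 u2"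
      unfolding A_def by auto
    from swap_mem[OF assms(4) q(2-4)] show "q \<in> B" unfolding B_def q(1) by simp
  qed
  have BA: "prod.swap ` B \<subseteq> A"
  proof
    fix q assume "q \<in> prod.swap ` B"
    then obtain u1 u2 where q: "q = (u2, u1)" "u1 \<le> \<eta> x" "u2 \<le> \<eta> y" "\<xi> = upd \<eta> x y u1 u2"
      unfolding B_def by auto
    from swap_mem[OF assms(4) q(2-4)] show "q \<in> A" unfolding A_def q(1) by simp
  qed
  have fA: "finite A" "finite B" unfolding A_def B_def by auto
  have "card A = card (prod.swap ` A)" by (simp add: card_image)
  also have "\<dots> \<le> card B" by (rule card_mono[OF fA(2) AB])
  finally have c1: "card A \<le> card B" .
  have "card B = card (prod.swap ` B)" by (simp add: card_image)
  also have "\<dots> \<le> card A" by (rule card_mono[OF fA(1) BA])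
  finally have cAB: "card A = card B" using c1 by simp
  have "cx * card A = cy * card B"
  proof (cases "card A = 0")
    case True thus ?thesis using cAB by simp
  next
    case False
    then obtain p where "p \<in> A" using card.empty by (metis all_not_in_conv)
    hence e: "\<eta> = upd \<xi> x y (fst p) (snd p)" unfolding A_def by auto
    have "cx = cy" unfolding cx_def cy_def by (rule prod.cong) (auto simp: e)
    thus ?thesis using cAB by simp
  qed
  thus ?thesis using L R by simp
qed

lemma mu_rev:
  assumes "finite_connected_graph V E"
  shows "mu V \<xi> * ie_step E \<xi> \<eta> = mu V \<eta> * ie_step E \<eta> \<xi>"
proof (cases "E = {}")
  case True thus ?thesis by (simp add: ie_step_def)
next
  case False
  note P = fcg_props[OF assms(1)]
  have "mu V \<xi> * ie_step E \<xi> \<eta> = (1 / real (card E)) * (\<Sum>e\<in>E. mu V \<xi> * (case e of (x, y) \<Rightarrow> \<Sum>u1\<in>{0..\<xi> x}. \<Sum>u2\<in>{0..\<xi> y}.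
          (if \<eta> = upd \<xi> x y u1 u2 then 1 / (real (\<xi> x + 1) * real (\<xi> y + 1)) else 0)))"
    using False unfolding ie_step_def by (simp only: if_False sum_distrib_left mult.left_commute)
  also have "(\<Sum>e\<in>E. mu V \<xi> * (case e of (x, y) \<Rightarrow> \<Sum>u1\<in>{0..\<xi> x}. \<Sum>u2\<in>{0..\<xi> y}.
          (if \<eta> = upd \<xi> x y u1 u2 then 1 / (real (\<xi> x + 1) * real (\<xi> y + 1)) else 0)))
      = (\<Sum>e\<in>E. mu V \<eta> * (case e of (x, y) \<Rightarrow> \<Sum>u1\<in>{0..\<eta> x}. \<Sum>u2\<in>{0..\<eta> y}.
          (if \<xi> = upd \<eta> x y u1 u2 then 1 / (real (\<eta> x + 1) * real (\<eta> y + 1)) else 0)))"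
  proof (rule sum.cong, simp)
    fix e assume "e \<in> E"
    then obtain x y where e: "e = (x,y)" "(x,y) \<in> E" by (cases e) auto
    hence "x \<in> V" "y \<in> V" "x \<noteq> y" using P(3,5) by (auto simp: irrefl_def)
    thus "mu V \<xi> * (case e of (x, y) \<Rightarrow> \<Sum>u1\<in>{0..\<xi> x}. \<Sum>u2\<in>{0..\<xi> y}.
          (if \<eta> = upd \<xi> x y u1 u2 then 1 / (real (\<xi> x + 1) * real (\<xi> y + 1)) else 0)) =
          mu V \<eta> * (case e of (x, y) \<Rightarrow> \<Sum>u1\<in>{0..\<eta> x}. \<Sum>u2\<in>{0..\<eta> y}.
          (if \<xi> = upd \<eta> x y u1 u2 then 1 / (real (\<eta> x + 1) * real (\<eta> y + 1)) else 0))"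
      using edge_rev[OF P(1)] e by simp
  qed
  also have "(1 / real (card E)) * (\<Sum>e\<in>E. mu V \<eta> * (case e of (x, y) \<Rightarrow> \<Sum>u1\<in>{0..\<eta> x}. \<Sum>u2\<in>{0..\<eta> y}.
          (if \<xi> = upd \<eta> x y u1 u2 then 1 / (real (\<eta> x + 1) * real (\<eta> y + 1)) else 0))) =
        mu V \<eta> * ie_step E \<eta> \<xi>"
    using False unfolding ie_step_def by (simp only: if_False sum_distrib_left mult.left_commute)
  finally show ?thesis .
qed


lemma sum_lin:
  fixes p h :: "'b \<Rightarrow> real"
  shows "(\<Sum>z\<in>C. p z * (m - h z)) = m * (\<Sum>z\<in>C. p z) - (\<Sum>z\<in>C. p z * h z)"
  by (simp add: right_diff_distrib sum_subtractf sum_distrib_left mult.commute)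

definition mv :: "('a \<Rightarrow> nat) \<Rightarrow> 'a \<Rightarrow> 'a \<Rightarrow> ('a \<Rightarrow> nat)" where
  "mv \<xi> a b = (if a = b then \<xi> else \<xi>(a := \<xi> a - 1, b := \<xi> b + 1))"

lemma pos_move:
  assumes "finite E" "(x,y) \<in> E" "x \<noteq> y" "1 \<le> \<xi> x"
  shows "ie_step E \<xi> (mv \<xi> x y) > 0"
proof -
  let ?\<eta> = "mv \<xi> x y"
  let ?g = "\<lambda>x y u1 u2. (if ?\<eta> = upd \<xi> x y u1 u2 then 1 / (real (\<xi> x + 1) * real (\<xi> y + 1)) else (0::real))"
  let ?G = "\<lambda>(x, y). \<Sum>u1\<in>{0..\<xi> x}. \<Sum>u2\<in>{0..\<xi> y}. ?g x y u1 u2"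
  have eq: "?\<eta> = upd \<xi> x y 1 0" using assms(3,4) by (auto simp: mv_def)
  have "0 < 1 / (real (\<xi> x + 1) * real (\<xi> y + 1))" by simp
  also have "\<dots> = ?g x y 1 0" using eq by simp
  also have "\<dots> \<le> (\<Sum>u2\<in>{0..\<xi> y}. ?g x y 1 u2)"
    by (rule member_le_sum) (auto intro: ite_nonneg)
  also have "\<dots> \<le> (\<Sum>u1\<in>{0..\<xi> x}. \<Sum>u2\<in>{0..\<xi> y}. ?g x y u1 u2)"
    by (rule member_le_sum[where f = "\<lambda>u1. \<Sum>u2\<in>{0..\<xi> y}. ?g x y u1 u2"])
       (use assms(4) in \<open>auto intro!: sum_nonneg ite_nonneg\<close>)
  also have "\<dots> = ?G (x,y)" by simp
  also have "\<dots> \<le> sum ?G E"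
    by (rule member_le_sum) (use assms in \<open>auto intro!: sum_nonneg ite_nonneg simp: split_def\<close>)
  finally have pos: "0 < sum ?G E" .
  have ne: "E \<noteq> {}" using assms by auto
  have "ie_step E \<xi> ?\<eta> = (1 / real (card E)) * sum ?G E"
    unfolding ie_step_def using ne by simp
  moreover have "card E > 0" using ne assms(1) by (simp add: card_gt_0_iff)
  ultimately show ?thesis using pos by simp
qed

lemma mv_configs:
  assumes "finite V" "E \<subseteq> V \<times> V" "(a,b) \<in> E\<^sup>*" "1 \<le> \<xi> a" "\<xi> \<in> configs V M" "a \<in> V"
  shows "mv \<xi> a b \<in> configs V M"
proof (cases "a = b")
  case True thus ?thesis using assms by (simp add: mv_def)
next
  case False
  have "b \<in> V" using assms(3) False assms(2,6)
    by (metis mem_Sigma_iff rtranclE subsetD)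
  have "upd \<xi> a b 1 0 \<in> configs V M" by (rule upd_configs) (use assms False \<open>b \<in> V\<close> in auto)
  moreover have "upd \<xi> a b 1 0 = mv \<xi> a b" using False by (auto simp: mv_def)
  ultimately show ?thesis by simp
qed

lemma irred:
  assumes G: "finite_connected_graph V E" and SC: "S \<subseteq> configs V M" and ne: "S \<noteq> {}"
    and cl: "\<And>\<eta> \<xi>. \<eta> \<in> S \<Longrightarrow> \<xi> \<in> configs V M \<Longrightarrow> ie_step E \<eta> \<xi> > 0 \<Longrightarrow> \<xi> \<in> S"
  shows "configs V M \<subseteq> S"
proof -
  note P = fcg_props[OF G]
  have edge: "mv \<eta> a b \<in> S" if "\<eta> \<in> S" "(a,b) \<in> E" "1 \<le> \<eta> a" for \<eta> a b
  proof -
    have ab: "a \<noteq> b" "a \<in> V" using that(2) P(3,5) by (auto simp: irrefl_def)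
    show ?thesis
      by (rule cl[OF that(1)]) (use mv_configs[OF P(1,3), of a b \<eta> M] that SC ab pos_move[of E a b \<eta>, OF P(7) that(2) ab(1) that(3)] in auto)
  qed
  have path: "\<forall>\<eta>\<in>S. 1 \<le> \<eta> a \<longrightarrow> mv \<eta> a b \<in> S" if "(a,b) \<in> E\<^sup>*" for a b
    using that
  proof (induction rule: rtrancl_induct)
    case base thus ?case by (simp add: mv_def)
  next
    case (step z b)
    show ?case
    proof (intro ballI impI)
      fix \<eta> assume h: "\<eta> \<in> S" "1 \<le> \<eta> a"
      define \<eta>1 where "\<eta>1 = mv \<eta> a z"
      have s1: "\<eta>1 \<in> S" using step.IH h unfolding \<eta>1_def by blast
      have z1: "1 \<le> \<eta>1 z" using h by (auto simp: \<eta>1_def mv_def)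
      have zb: "z \<noteq> b" using step.hyps(2) P(5) by (auto simp: irrefl_def)
      have "mv \<eta>1 z b \<in> S" by (rule edge[OF s1 step.hyps(2) z1])
      moreover have "mv \<eta>1 z b = mv \<eta> a b"
        using zb h(2) by (auto simp: \<eta>1_def mv_def fun_eq_iff)
      ultimately show "mv \<eta> a b \<in> S" by simp
    qed
  qed
  show ?thesis
  proof
    fix \<xi> assume \<xi>C: "\<xi> \<in> configs V M"
    define D where "D = (\<lambda>\<eta>. \<Sum>z\<in>V. \<eta> z - \<xi> z)"
    have main: "\<forall>\<eta>. \<eta> \<in> S \<longrightarrow> D \<eta> = n \<longrightarrow> \<xi> \<in> S" for n
    proof (induction n rule: less_induct)
      case (less n)
      show ?case
      proof (intro allI impI)
        fix \<eta> assume \<eta>S: "\<eta> \<in> S" and Dn: "D \<eta> = n"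
        have \<eta>C: "\<eta> \<in> configs V M" using \<eta>S SC by auto
        show "\<xi> \<in> S"
        proof (cases "\<eta> = \<xi>")
          case True thus ?thesis using \<eta>S by simp
        next
          case False
          have z\<eta>: "\<forall>x. x\<notin>V \<longrightarrow> \<eta> x = 0" and s\<eta>: "sum \<eta> V = M"
            and z\<xi>: "\<forall>x. x\<notin>V \<longrightarrow> \<xi> x = 0" and s\<xi>: "sum \<xi> V = M"
            using \<eta>C \<xi>C by (auto simp: configs_def)
          obtain w where w: "w \<in> V" "\<eta> w \<noteq> \<xi> w" using False z\<eta> z\<xi> by (metis ext)
          have "\<exists>a\<in>V. \<eta> a > \<xi> a"
          proof (rule ccontr)
            assume "\<not> ?thesis"
            hence le: "\<forall>a\<in>V. \<eta> a \<le> \<xi> a" by auto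
            hence "sum \<eta> V < sum \<xi> V" using w le
              by (intro sum_strict_mono_ex1[OF P(1)]) (auto intro: le_neq_implies_less)
            thus False using s\<eta> s\<xi> by simp
          qed
          then obtain a where a: "a \<in> V" "\<eta> a > \<xi> a" by blast
          have "\<exists>b\<in>V. \<eta> b < \<xi> b"
          proof (rule ccontr)
            assume "\<not> ?thesis"
            hence le: "\<forall>b\<in>V. \<xi> b \<le> \<eta> b" by auto
            hence "sum \<xi> V < sum \<eta> V" using w le
              by (intro sum_strict_mono_ex1[OF P(1)]) (force simp: order_le_less)+
            thus False using s\<eta> s\<xi> by simp
          qed
          then obtain b where b: "b \<in> V" "\<eta> b < \<xi> b" by blast
          have ab: "a \<noteq> b" using a b by auto
          have m: "mv \<eta> a b \<in> S" using path[OF P(6)[OF a(1) b(1)]] \<eta>S a by auto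
          have "D (mv \<eta> a b) < D \<eta>" unfolding D_def
          proof (rule sum_strict_mono_ex1[OF P(1)])
            show "\<forall>z\<in>V. mv \<eta> a b z - \<xi> z \<le> \<eta> z - \<xi> z" using ab b by (auto simp: mv_def)
            show "\<exists>z\<in>V. mv \<eta> a b z - \<xi> z < \<eta> z - \<xi> z" using ab a by (auto simp: mv_def)
          qed
          thus "\<xi> \<in> S" using less.IH Dn m by blast
        qed
      qed
    qed
    obtain \<eta> where "\<eta> \<in> S" using ne by blast
    thus "\<xi> \<in> S" using main by blast
  qed
qed


theorem lemma4:
  fixes V :: "'a set" and E :: "('a \<times> 'a) set" and N M :: nat
  assumes "finite_connected_graph V E" and "card V = N"
  defines "\<pi>Y \<equiv> (\<lambda>\<xi>. mu V \<xi> / (\<Sum>\<eta>\<in>configs V M. mu V \<eta>))"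
  shows "stationary V E M \<pi>Y \<and> reversible V E M \<pi>Y \<and>
         (\<forall>\<pi>. stationary V E M \<pi> \<longrightarrow> (\<forall>\<xi>\<in>configs V M. \<pi> \<xi> = \<pi>Y \<xi>))"
proof -
  note P = fcg_props[OF assms(1)]
  define C where "C = configs V M"
  define Z where "Z = (\<Sum>\<eta>\<in>C. mu V \<eta>)"
  have piY: "\<pi>Y \<xi> = mu V \<xi> / Z" for \<xi> unfolding \<pi>Y_def Z_def C_def by simp
  have fin: "finite C" unfolding C_def by (rule configs_finite[OF P(1)])
  obtain v where "v \<in> V" using P(2) by blast
  hence Cne: "C \<noteq> {}" unfolding C_def using configs_nonempty[OF P(1)] by blast
  have mupos: "mu V \<xi> > 0" for \<xi> unfolding mu_def by (rule prod_pos) auto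
  have Zpos: "Z > 0" unfolding Z_def using fin Cne mupos by (intro sum_pos) auto
  have pipos: "\<pi>Y \<xi> > 0" for \<xi> using piY mupos Zpos by simp
  have rev: "\<pi>Y \<xi> * ie_step E \<xi> \<eta> = \<pi>Y \<eta> * ie_step E \<eta> \<xi>" for \<xi> \<eta>
    using mu_rev[OF assms(1), of \<xi> \<eta>] unfolding piY by (simp add: field_simps)
  have rs: "(\<Sum>\<xi>\<in>C. ie_step E \<eta> \<xi>) = 1" if "\<eta> \<in> C" for \<eta>
    using row_sum[OF assms(1)] that unfolding C_def by blast
  have bal: "(\<Sum>\<xi>\<in>C. \<pi>Y \<xi> * ie_step E \<xi> \<eta>) = \<pi>Y \<eta>" if "\<eta> \<in> C" for \<eta>
  proof -
    have "(\<Sum>\<xi>\<in>C. \<pi>Y \<xi> * ie_step E \<xi> \<eta>) = (\<Sum>\<xi>\<in>C. \<pi>Y \<eta> * ie_step E \<eta> \<xi>)"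
      using rev by simp
    also have "\<dots> = \<pi>Y \<eta> * (\<Sum>\<xi>\<in>C. ie_step E \<eta> \<xi>)" by (simp add: sum_distrib_left)
    finally show ?thesis using rs[OF that] by simp
  qed
  have sum1: "(\<Sum>\<xi>\<in>C. \<pi>Y \<xi>) = 1"
    unfolding piY using Zpos by (simp add: sum_divide_distrib[symmetric] Z_def)
  have stat: "stationary V E M \<pi>Y"
    unfolding stationary_def C_def[symmetric] using pipos sum1 bal by (auto intro: less_imp_le)
  have revd: "reversible V E M \<pi>Y" unfolding reversible_def using rev by blast
  have uniq: "\<forall>\<xi>\<in>C. \<pi> \<xi> = \<pi>Y \<xi>" if st: "stationary V E M \<pi>" for \<pi>
  proof -
    have pst: "\<And>\<eta>. \<eta> \<in> C \<Longrightarrow> (\<Sum>\<xi>\<in>C. \<pi> \<xi> * ie_step E \<xi> \<eta>) = \<pi> \<eta>"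
      and psum: "(\<Sum>\<xi>\<in>C. \<pi> \<xi>) = 1"
      using st unfolding stationary_def C_def by auto
    define h where "h = (\<lambda>\<xi>. \<pi> \<xi> / \<pi>Y \<xi>)"
    have pih: "\<pi> \<xi> = h \<xi> * \<pi>Y \<xi>" for \<xi> unfolding h_def using pipos[of \<xi>] by simp
    have harm: "(\<Sum>\<xi>\<in>C. ie_step E \<eta> \<xi> * h \<xi>) = h \<eta>" if "\<eta> \<in> C" for \<eta>
    proof -
      have "\<pi>Y \<eta> * h \<eta> = \<pi> \<eta>" using pih by simp
      also have "\<dots> = (\<Sum>\<xi>\<in>C. h \<xi> * (\<pi>Y \<xi> * ie_step E \<xi> \<eta>))"
        using pst[OF that] pih by (simp add: mult.assoc)
      also have "\<dots> = (\<Sum>\<xi>\<in>C. \<pi>Y \<eta> * (ie_step E \<eta> \<xi> * h \<xi>))"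
      proof (rule sum.cong, simp)
        fix \<xi> show "h \<xi> * (\<pi>Y \<xi> * ie_step E \<xi> \<eta>) = \<pi>Y \<eta> * (ie_step E \<eta> \<xi> * h \<xi>)"
          using rev[of \<xi> \<eta>] by (simp add: mult.commute mult.left_commute)
      qed
      also have "\<dots> = \<pi>Y \<eta> * (\<Sum>\<xi>\<in>C. ie_step E \<eta> \<xi> * h \<xi>)" by (simp add: sum_distrib_left)
      finally show ?thesis using pipos[of \<eta>] by simp
    qed
    define m where "m = Max (h ` C)"
    have hle: "h \<xi> \<le> m" if "\<xi> \<in> C" for \<xi> unfolding m_def using fin that by simp
    have "m \<in> h ` C" unfolding m_def using fin Cne by simp
    then obtain \<xi>0 where \<xi>0: "\<xi>0 \<in> C" "h \<xi>0 = m" by auto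
    define S where "S = {\<xi>\<in>C. h \<xi> = m}"
    have cl: "\<xi> \<in> S" if "\<eta> \<in> S" "\<xi> \<in> configs V M" "ie_step E \<eta> \<xi> > 0" for \<eta> \<xi>
    proof -
      have \<eta>: "\<eta> \<in> C" "h \<eta> = m" using that(1) unfolding S_def by auto
      have \<xi>C: "\<xi> \<in> C" using that(2) unfolding C_def .
      have "(\<Sum>\<zeta>\<in>C. ie_step E \<eta> \<zeta> * (m - h \<zeta>)) = m * (\<Sum>\<zeta>\<in>C. ie_step E \<eta> \<zeta>) - (\<Sum>\<zeta>\<in>C. ie_step E \<eta> \<zeta> * h \<zeta>)"
        by (rule sum_lin)
      also have "\<dots> = 0" using rs[OF \<eta>(1)] harm[OF \<eta>(1)] \<eta>(2) by simp
      finally have z: "(\<Sum>\<zeta>\<in>C. ie_step E \<eta> \<zeta> * (m - h \<zeta>)) = 0" .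
      have nn: "\<forall>\<zeta>\<in>C. 0 \<le> ie_step E \<eta> \<zeta> * (m - h \<zeta>)"
      proof
        fix \<zeta> assume "\<zeta> \<in> C"
        hence "0 \<le> m - h \<zeta>" using hle by simp
        thus "0 \<le> ie_step E \<eta> \<zeta> * (m - h \<zeta>)" by (intro mult_nonneg_nonneg step_nonneg)
      qed
      have all0: "\<forall>\<zeta>\<in>C. ie_step E \<eta> \<zeta> * (m - h \<zeta>) = 0"
        using iffD1[OF sum_nonneg_eq_0_iff[OF fin, of "\<lambda>\<zeta>. ie_step E \<eta> \<zeta> * (m - h \<zeta>)"]] nn z by blast
      have "ie_step E \<eta> \<xi> * (m - h \<xi>) = 0" using all0 \<xi>C by blast
      hence "m - h \<xi> = 0" using that(3) by simp
      hence "h \<xi> = m" by simp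
      thus ?thesis using \<xi>C unfolding S_def by simp
    qed
    have "configs V M \<subseteq> S"
    proof (rule irred[OF assms(1)])
      show "S \<subseteq> configs V M" unfolding S_def C_def by blast
      show "S \<noteq> {}" using \<xi>0 unfolding S_def by blast
      show "\<And>\<eta> \<xi>. \<eta> \<in> S \<Longrightarrow> \<xi> \<in> configs V M \<Longrightarrow> 0 < ie_step E \<eta> \<xi> \<Longrightarrow> \<xi> \<in> S"
        by (rule cl)
    qed
    hence hm: "h \<xi> = m" if "\<xi> \<in> C" for \<xi> using that unfolding S_def C_def by blast
    have "1 = (\<Sum>\<xi>\<in>C. \<pi> \<xi>)" using psum by simp
    also have "\<dots> = (\<Sum>\<xi>\<in>C. m * \<pi>Y \<xi>)" using pih hm by (intro sum.cong) auto
    also have "\<dots> = m" using sum1 by (simp add: sum_distrib_left[symmetric])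
    finally have "m = 1" by simp
    thus ?thesis using pih hm by (metis mult_1)
  qed
  show ?thesis using stat revd uniq unfolding C_def by blast
qed

end
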